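(* Let $H$ be a countable group, and suppose $G\le H\le K$ with $G$ finitely generated and $C_K(G)=1$. Then all terms of the normalizer tower of $H$ in $K$ are countable, and therefore the tower has countable height.
   Context: The normalizer tower of $H$ in $K$ is defined by $N^0=H$, $N^{\alpha+1}=N_K(N^\alpha)$ and $N^\alpha=\bigcup_{\beta<\alpha}N^\beta$ for limit ordinals $\alpha$. Its height is the least ordinal $\alpha$ with $N^{\alpha}=N^{\alpha+1}$. $C_K(G)$ is the centralizer of $G$ in $K$. *)

theory Defs
  imports "HOL-Algebra.Algebra" "HOL-Library.Countable_Set"
begin

definition centralizer :: "('a, 'b) monoid_scheme \<Rightarrow> 'a set \<Rightarrow> 'a set" where
  "centralizer K A = {k \<in> carrier K. \<forall>g \<in> A. k \<otimes>\<^bsub>K\<^esub> g = g \<otimes>\<^bsub>K\<^esub> k}"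

text \<open>Ordinals are represented by well-order relations r (on Field r); an element
  i of Field r stands for the ordinal type of its strict initial segment.
  f is the normalizer tower of H in K indexed along r:
  f i = H at the bottom, f i = N_K(f j) if i is the successor of j, and
  f i = union of the earlier terms if i is a limit point.\<close>
definition strict_pred :: "'i rel \<Rightarrow> 'i \<Rightarrow> 'i set" where
  "strict_pred r i = {j. (j, i) \<in> r \<and> j \<noteq> i}"

definition immediate_pred :: "'i rel \<Rightarrow> 'i \<Rightarrow> 'i \<Rightarrow> bool" where
  "immediate_pred r j i \<longleftrightarrow> j \<in> strict_pred r i \<and> (\<forall>k \<in> strict_pred r i. (k, j) \<in> r)"

definition normalizer_tower_on ::
    "('a, 'b) monoid_scheme \<Rightarrow> 'a set \<Rightarrow> 'i rel \<Rightarrow> ('i \<Rightarrow> 'a set) \<Rightarrow> bool" where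
  "normalizer_tower_on K H r f \<longleftrightarrow> Well_order r \<and>
     (\<forall>i \<in> Field r.
        (strict_pred r i = {} \<longrightarrow> f i = H) \<and>
        (\<forall>j. immediate_pred r j i \<longrightarrow> f i = normalizer K (f j)) \<and>
        (strict_pred r i \<noteq> {} \<and> (\<nexists>j. immediate_pred r j i) \<longrightarrow>
            f i = (\<Union>j \<in> strict_pred r i. f j)))"

end

theory Submission
  imports Defs
begin


lemma countable_PiE':
  "finite I \<Longrightarrow> (\<And>i. i \<in> I \<Longrightarrow> countable (F i)) \<Longrightarrow> countable (Pi\<^sub>E I F)"
  by (induct I arbitrary: F rule: finite_induct) (auto simp: PiE_insert_eq)

primrec Cn :: "('a,'b) monoid_scheme \<Rightarrow> 'a set \<Rightarrow> 'a set \<Rightarrow> nat \<Rightarrow> 'a set" where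
  "Cn K H S 0 = H"
| "Cn K H S (Suc k) = Cn K H S k \<union>
     {x \<in> carrier K. \<forall>s\<in>S. x \<otimes>\<^bsub>K\<^esub> s \<otimes>\<^bsub>K\<^esub> inv\<^bsub>K\<^esub> x \<in> Cn K H S k}"

lemma Cn_mono: "k \<le> m \<Longrightarrow> Cn K H S k \<subseteq> Cn K H S m"
  by (induct m) (auto simp: le_Suc_eq)

lemma norm_mem:
  assumes "group K" "A \<subseteq> carrier K" "x \<in> normalizer K A" "a \<in> A"
  shows "x \<otimes>\<^bsub>K\<^esub> a \<otimes>\<^bsub>K\<^esub> inv\<^bsub>K\<^esub> x \<in> A"
proof -
  have "x \<in> carrier K" and eq: "x <#\<^bsub>K\<^esub> A #>\<^bsub>K\<^esub> inv\<^bsub>K\<^esub> x = A"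
    using assms unfolding normalizer_def stabilizer_def by auto
  have "x \<otimes>\<^bsub>K\<^esub> a \<otimes>\<^bsub>K\<^esub> inv\<^bsub>K\<^esub> x \<in> x <#\<^bsub>K\<^esub> A #>\<^bsub>K\<^esub> inv\<^bsub>K\<^esub> x"
    using assms(4) unfolding l_coset_def r_coset_def by auto
  then show ?thesis using eq by simp
qed

lemma sub_norm:
  fixes K :: "('a,'b) monoid_scheme" (structure)
  assumes "group K" "subgroup A K"
  shows "A \<subseteq> normalizer K A"
proof -
  interpret group K by fact
  have "normal A (K\<lparr>carrier:= normalizer K A\<rparr>)" using subgroup_in_normalizer assms(2) .
  then have "subgroup A (K\<lparr>carrier:= normalizer K A\<rparr>)" by (rule normal_imp_subgroup)
  then show ?thesis using subgroup.subset by fastforce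
qed

lemma union_chain_subgroup:
  fixes K :: "('a,'b) monoid_scheme" (structure)
  assumes "group K" "I \<noteq> {}" "\<And>j. j \<in> I \<Longrightarrow> subgroup (F j) K"
    "\<And>j k. j \<in> I \<Longrightarrow> k \<in> I \<Longrightarrow> F j \<subseteq> F k \<or> F k \<subseteq> F j"
  shows "subgroup (\<Union>j\<in>I. F j) K"
proof -
  interpret group K by fact
  show ?thesis
  proof (rule subgroupI)
    show "(\<Union>j\<in>I. F j) \<subseteq> carrier K"
    proof
      fix x assume "x \<in> (\<Union>j\<in>I. F j)"
      then obtain j where "j \<in> I" "x \<in> F j" by blast
      then show "x \<in> carrier K" using subgroup.subset[OF assms(3)[of j]] by blast
    qed
    obtain j where j: "j \<in> I" using assms(2) by blast
    have "\<one> \<in> F j" using subgroup.one_closed[OF assms(3)[OF j]] .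
    then show "(\<Union>j\<in>I. F j) \<noteq> {}" using j by blast
    show "inv a \<in> (\<Union>j\<in>I. F j)" if aa: "a \<in> (\<Union>j\<in>I. F j)" for a
    proof -
      obtain j where j: "j \<in> I" "a \<in> F j" using aa by blast
      have "inv a \<in> F j" using subgroup.m_inv_closed[OF assms(3)[OF j(1)] j(2)] .
      then show ?thesis using j by blast
    qed
    show "a \<otimes> b \<in> (\<Union>j\<in>I. F j)" if ab: "a \<in> (\<Union>j\<in>I. F j)" "b \<in> (\<Union>j\<in>I. F j)" for a b
    proof -
      obtain j k where j: "j \<in> I" "a \<in> F j" and k: "k \<in> I" "b \<in> F k" using ab by blast
      show ?thesis
      proof (cases "F j \<subseteq> F k")
        case True
        then have "a \<in> F k" using j by blast
        then have "a \<otimes> b \<in> F k" using subgroup.m_closed[OF assms(3)[OF k(1)]] k(2) by blast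
        then show ?thesis using k by blast
      next
        case False
        then have "F k \<subseteq> F j" using assms(4)[OF j(1) k(1)] by blast
        then have "b \<in> F j" using k by blast
        then have "a \<otimes> b \<in> F j" using subgroup.m_closed[OF assms(3)[OF j(1)]] j(2) by blast
        then show ?thesis using j by blast
      qed
    qed
  qed
qed

lemma conj_inj:
  fixes K :: "('a,'b) monoid_scheme" (structure)
  assumes "group K" "S \<subseteq> carrier K" "generate K S = G"
    "centralizer K G = {\<one>\<^bsub>K\<^esub>}"
  shows "inj_on (\<lambda>x. \<lambda>s\<in>S. x \<otimes>\<^bsub>K\<^esub> s \<otimes>\<^bsub>K\<^esub> inv\<^bsub>K\<^esub> x) (carrier K)"
proof (rule inj_onI)
  interpret group K by fact
  fix x y assume x: "x \<in> carrier K" and y: "y \<in> carrier K"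
    and e: "(\<lambda>s\<in>S. x \<otimes> s \<otimes> inv x) = (\<lambda>s\<in>S. y \<otimes> s \<otimes> inv y)"
  define z where "z = inv y \<otimes> x"
  have z: "z \<in> carrier K" using x y z_def by simp
  have comm: "z \<otimes> s = s \<otimes> z" if s: "s \<in> S" for s
  proof -
    have sc: "s \<in> carrier K" using s assms(2) by blast
    have "x \<otimes> s \<otimes> inv x = y \<otimes> s \<otimes> inv y" using fun_cong[OF e, of s] s by simp
    then have "inv y \<otimes> (x \<otimes> s \<otimes> inv x) \<otimes> x = inv y \<otimes> (y \<otimes> s \<otimes> inv y) \<otimes> x" by simp
    moreover have "inv y \<otimes> (x \<otimes> s \<otimes> inv x) \<otimes> x = z \<otimes> s"
      using x y sc by (simp add: z_def m_assoc)
    moreover have "inv y \<otimes> (y \<otimes> s \<otimes> inv y) \<otimes> x = s \<otimes> z"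
      using x y sc by (simp add: z_def m_assoc flip: m_assoc[of "inv y" y])
    ultimately show ?thesis by simp
  qed
  define E where "E = {g \<in> carrier K. z \<otimes> g = g \<otimes> z}"
  have "subgroup E K"
  proof (rule subgroupI)
    show "E \<subseteq> carrier K" unfolding E_def by blast
    show "E \<noteq> {}" using z unfolding E_def by (auto intro!: exI[of _ \<one>])
    show "inv a \<in> E" if "a \<in> E" for a
    proof -
      have a: "a \<in> carrier K" "z \<otimes> a = a \<otimes> z" using that E_def by auto
      have "inv a \<otimes> z = inv a \<otimes> (z \<otimes> a) \<otimes> inv a" using a(1) z by (simp add: m_assoc)
      also have "\<dots> = inv a \<otimes> (a \<otimes> z) \<otimes> inv a" using a by simp
      also have "\<dots> = z \<otimes> inv a" using a(1) z by (simp flip: m_assoc)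
      finally have "inv a \<otimes> z = z \<otimes> inv a" .
      then show ?thesis using a z E_def by auto
    qed
    show "a \<otimes> b \<in> E" if "a \<in> E" "b \<in> E" for a b
    proof -
      have a: "a \<in> carrier K" "z \<otimes> a = a \<otimes> z" and b: "b \<in> carrier K" "z \<otimes> b = b \<otimes> z"
        using that E_def by auto
      have "z \<otimes> (a \<otimes> b) = (z \<otimes> a) \<otimes> b" using a(1) b(1) z by (simp add: m_assoc)
      also have "\<dots> = (a \<otimes> z) \<otimes> b" using a by simp
      also have "\<dots> = a \<otimes> (z \<otimes> b)" using a(1) b(1) z by (simp add: m_assoc)
      also have "\<dots> = a \<otimes> (b \<otimes> z)" using b by simp
      also have "\<dots> = a \<otimes> b \<otimes> z" using a(1) b(1) z by (simp add: m_assoc)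
      finally show ?thesis using a b E_def by auto
    qed
  qed
  moreover have "S \<subseteq> E" using comm assms(2) E_def by auto
  ultimately have "G \<subseteq> E" using generate_subgroup_incl assms(3) by blast
  then have "z \<in> centralizer K G" unfolding centralizer_def E_def using z by auto
  then have "inv y \<otimes> x = \<one>" using assms(4) z_def by simp
  then show "x = y" using x y by (metis inv_equality inv_inv inv_closed)
qed

lemma Cn_countable:
  assumes "countable H" "finite S"
    "inj_on (\<lambda>x. \<lambda>s\<in>S. x \<otimes>\<^bsub>K\<^esub> s \<otimes>\<^bsub>K\<^esub> inv\<^bsub>K\<^esub> x) (carrier K)"
  shows "countable (Cn K H S k)"
proof (induct k)
  case 0 then show ?case using assms by simp
next
  case (Suc k)
  let ?A = "{x \<in> carrier K. \<forall>s\<in>S. x \<otimes>\<^bsub>K\<^esub> s \<otimes>\<^bsub>K\<^esub> inv\<^bsub>K\<^esub> x \<in> Cn K H S k}"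
  let ?f = "\<lambda>x. \<lambda>s\<in>S. x \<otimes>\<^bsub>K\<^esub> s \<otimes>\<^bsub>K\<^esub> inv\<^bsub>K\<^esub> x"
  have sub: "?f ` ?A \<subseteq> Pi\<^sub>E S (\<lambda>_. Cn K H S k)" by auto
  have "countable (Pi\<^sub>E S (\<lambda>_. Cn K H S k))"
    by (rule countable_PiE'[OF assms(2)]) (rule Suc)
  then have c: "countable (?f ` ?A)" by (rule countable_subset[OF sub])
  have i: "inj_on ?f ?A" by (rule inj_on_subset[OF assms(3)]) blast
  have "countable ?A" by (rule countable_image_inj_on[OF c i])
  then show ?case using Suc by simp
qed

lemma finite_bound:
  assumes "finite S" "\<forall>s\<in>S. \<exists>k. x s \<in> Cn K H T k"
  shows "\<exists>k. \<forall>s\<in>S. x s \<in> Cn K H T k"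
proof -
  have "\<exists>kk. \<forall>s\<in>S. x s \<in> Cn K H T (kk s)" by (rule bchoice[OF assms(2)])
  then obtain kk where kk: "\<forall>s\<in>S. x s \<in> Cn K H T (kk s)" ..
  have "\<forall>s\<in>S. x s \<in> Cn K H T (\<Sum>s\<in>S. kk s)"
  proof
    fix s assume "s \<in> S"
    then have le: "kk s \<le> (\<Sum>s\<in>S. kk s)" using assms(1) by (intro member_le_sum) auto
    have "x s \<in> Cn K H T (kk s)" using kk \<open>s \<in> S\<close> by blast
    then show "x s \<in> Cn K H T (\<Sum>s\<in>S. kk s)" by (rule subsetD[OF Cn_mono[OF le, of K H T]])
  qed
  then show ?thesis by blast
qed

lemma tw_cl:
  assumes "normalizer_tower_on K H r f" "i \<in> Field r"
  shows "(strict_pred r i = {} \<longrightarrow> f i = H) \<and>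
        (\<forall>j. immediate_pred r j i \<longrightarrow> f i = normalizer K (f j)) \<and>
        (strict_pred r i \<noteq> {} \<and> (\<nexists>j. immediate_pred r j i) \<longrightarrow>
            f i = (\<Union>j \<in> strict_pred r i. f j))"
proof -
  have "\<forall>i \<in> Field r.
        (strict_pred r i = {} \<longrightarrow> f i = H) \<and>
        (\<forall>j. immediate_pred r j i \<longrightarrow> f i = normalizer K (f j)) \<and>
        (strict_pred r i \<noteq> {} \<and> (\<nexists>j. immediate_pred r j i) \<longrightarrow>
            f i = (\<Union>j \<in> strict_pred r i. f j))"
    using assms(1) unfolding normalizer_tower_on_def by (rule conjunct2)
  then show ?thesis using assms(2) by (rule bspec)
qed

lemma tower_props:
  fixes K :: "('a,'b) monoid_scheme" (structure)
  assumes grp: "group K" and Hs: "subgroup H K" and SH: "S \<subseteq> H" and fin: "finite S"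
    and tw: "normalizer_tower_on K H r f"
  shows "i \<in> Field r \<longrightarrow> subgroup (f i) K \<and> H \<subseteq> f i \<and> (\<forall>j. (j,i) \<in> r \<longrightarrow> f j \<subseteq> f i)
           \<and> f i \<subseteq> (\<Union>k. Cn K H S k)"
proof -
  interpret group K by fact
  have wo: "Well_order r" using tw unfolding normalizer_tower_on_def by (rule conjunct1)
  have wfr: "wf (r - Id)" using wo unfolding well_order_on_def by blast
  have lin: "linear_order_on (Field r) r" using wo by (simp add: well_order_on_def)
  have rfl: "refl_on (Field r) r" using lin
    by (simp add: linear_order_on_def partial_order_on_def preorder_on_def)
  have tt: "total_on (Field r) r" using lin by (simp add: linear_order_on_def)
  have tot: "(j,k) \<in> r \<or> (k,j) \<in> r" if jk: "j \<in> Field r" "k \<in> Field r" for j k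
  proof (cases "j = k")
    case True then show ?thesis using refl_onD[OF rfl jk(1)] by simp
  next
    case False then show ?thesis using tt jk unfolding total_on_def by blast
  qed
  have spF: "j \<in> Field r \<and> (j,i) \<in> r - Id" if "j \<in> strict_pred r i" for j i
    using that unfolding strict_pred_def by (auto intro: FieldI1)
  show ?thesis
  proof (induct i rule: wf_induct_rule[OF wfr])
    case (1 i)
    show ?case
    proof
      assume iF: "i \<in> Field r"
      have IH: "subgroup (f j) K \<and> H \<subseteq> f j \<and> (\<forall>l. (l,j) \<in> r \<longrightarrow> f l \<subseteq> f j)
           \<and> f j \<subseteq> (\<Union>k. Cn K H S k)" if jj: "j \<in> strict_pred r i" for j
      proof -
        have "j \<in> Field r" "(j,i) \<in> r - Id" using spF[OF jj] by auto
        then show ?thesis using 1 by blast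
      qed
      have cl: "(strict_pred r i = {} \<longrightarrow> f i = H) \<and>
        (\<forall>j. immediate_pred r j i \<longrightarrow> f i = normalizer K (f j)) \<and>
        (strict_pred r i \<noteq> {} \<and> (\<nexists>j. immediate_pred r j i) \<longrightarrow>
            f i = (\<Union>j \<in> strict_pred r i. f j))"
        using tw_cl[OF tw iF] .
      have below: "l = i \<or> l \<in> strict_pred r i" if "(l,i) \<in> r" for l
        using that unfolding strict_pred_def by blast
      show "subgroup (f i) K \<and> H \<subseteq> f i \<and> (\<forall>l. (l,i) \<in> r \<longrightarrow> f l \<subseteq> f i)
           \<and> f i \<subseteq> (\<Union>k. Cn K H S k)"
      proof (cases "strict_pred r i = {}")
        case True
        then have fi: "f i = H" using cl by blast
        have mono: "\<forall>l. (l,i) \<in> r \<longrightarrow> f l \<subseteq> f i"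
        proof (intro allI impI)
          fix l assume "(l,i) \<in> r"
          then have "l = i \<or> l \<in> strict_pred r i" by (rule below)
          then have "l = i" using True by simp
          then show "f l \<subseteq> f i" by simp
        qed
        have "f i \<subseteq> Cn K H S 0" using fi by simp
        then have c: "f i \<subseteq> (\<Union>k. Cn K H S k)" by blast
        show ?thesis using fi Hs mono c by simp
      next
        case ne: False
        show ?thesis
        proof (cases "\<exists>j. immediate_pred r j i")
          case True
          then obtain j where j: "immediate_pred r j i" by blast
          have fi: "f i = normalizer K (f j)" using cl j by blast
          have jsp: "j \<in> strict_pred r i" using j unfolding immediate_pred_def by blast
          note IHj = IH[OF jsp]
          have fjc: "f j \<subseteq> carrier K" using IHj subgroup.subset by blast
          have sg: "subgroup (f i) K" using fi normalizer_imp_subgroup[OF fjc] by simp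
          have fji: "f j \<subseteq> f i" using fi sub_norm[OF grp] IHj by blast
          have mono: "\<forall>l. (l,i) \<in> r \<longrightarrow> f l \<subseteq> f i"
          proof (intro allI impI)
            fix l assume "(l,i) \<in> r"
            then have "l = i \<or> l \<in> strict_pred r i" by (rule below)
            then show "f l \<subseteq> f i"
            proof
              assume "l \<in> strict_pred r i"
              then have "(l,j) \<in> r" using j unfolding immediate_pred_def by blast
              then have "f l \<subseteq> f j" using IHj by blast
              then show ?thesis using fji by (rule subset_trans)
            qed simp
          qed
          have inC: "f i \<subseteq> (\<Union>k. Cn K H S k)"
          proof
            fix x assume x: "x \<in> f i"
            then have xc: "x \<in> carrier K" using sg subgroup.subset by blast
            have xN: "x \<in> normalizer K (f j)" using x fi by simp
            have "\<forall>s\<in>S. \<exists>k. x \<otimes> s \<otimes> inv x \<in> Cn K H S k"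
            proof
              fix s assume "s \<in> S"
              then have "s \<in> f j" using SH IHj by blast
              then have "x \<otimes> s \<otimes> inv x \<in> f j" using norm_mem[OF grp fjc xN] by simp
              then have "x \<otimes> s \<otimes> inv x \<in> (\<Union>k. Cn K H S k)" using IHj by blast
              then show "\<exists>k. x \<otimes> s \<otimes> inv x \<in> Cn K H S k" by simp
            qed
            then have "\<exists>k. \<forall>s\<in>S. x \<otimes> s \<otimes> inv x \<in> Cn K H S k"
              by (rule finite_bound[OF fin])
            then obtain k where "\<forall>s\<in>S. x \<otimes> s \<otimes> inv x \<in> Cn K H S k" ..
            then have "x \<in> Cn K H S (Suc k)" using xc by simp
            then show "x \<in> (\<Union>k. Cn K H S k)" by blast
          qed
          have "H \<subseteq> f i" using IHj fji by blast
          then show ?thesis using sg mono inC by simp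
        next
          case False
          then have fi: "f i = (\<Union>j \<in> strict_pred r i. f j)" using cl ne by blast
          have sg: "subgroup (f i) K" unfolding fi
          proof (rule union_chain_subgroup[OF grp ne])
            show "subgroup (f j) K" if "j \<in> strict_pred r i" for j using IH[OF that] by blast
            show "f j \<subseteq> f k \<or> f k \<subseteq> f j" if jk: "j \<in> strict_pred r i" "k \<in> strict_pred r i" for j k
            proof -
              have "j \<in> Field r" "k \<in> Field r" using spF[OF jk(1)] spF[OF jk(2)] by auto
              then have "(j,k) \<in> r \<or> (k,j) \<in> r" by (rule tot)
              then show ?thesis
              proof
                assume "(j,k) \<in> r" then show ?thesis using IH[OF jk(2)] by blast
              next
                assume "(k,j) \<in> r" then show ?thesis using IH[OF jk(1)] by blast
              qed
            qed
          qed
          obtain j0 where j0: "j0 \<in> strict_pred r i" using ne by blast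
          have "H \<subseteq> f j0" using IH[OF j0] by blast
          then have Hi: "H \<subseteq> f i" using fi j0 by blast
          have mono: "\<forall>l. (l,i) \<in> r \<longrightarrow> f l \<subseteq> f i"
          proof (intro allI impI)
            fix l assume "(l,i) \<in> r"
            then have "l = i \<or> l \<in> strict_pred r i" by (rule below)
            then show "f l \<subseteq> f i"
            proof
              assume "l \<in> strict_pred r i"
              then show ?thesis using fi by blast
            qed simp
          qed
          have "f i \<subseteq> (\<Union>k. Cn K H S k)"
          proof
            fix x assume "x \<in> f i"
            then obtain j where j: "j \<in> strict_pred r i" "x \<in> f j" using fi by blast
            then show "x \<in> (\<Union>k. Cn K H S k)" using IH[OF j(1)] by blast
          qed
          then show ?thesis using sg Hi mono by simp
        qed
      qed
    qed
  qed
qed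


inductive_set TT :: "'x set \<Rightarrow> ('x set \<Rightarrow> 'x set) \<Rightarrow> 'x set set" for H g where
  base: "H \<in> TT H g"
| step: "A \<in> TT H g \<Longrightarrow> A \<union> g A \<in> TT H g"
| union: "M \<noteq> {} \<Longrightarrow> (\<And>m. m \<in> M \<Longrightarrow> m \<in> TT H g) \<Longrightarrow> \<Union>M \<in> TT H g"

definition extreme :: "'x set \<Rightarrow> ('x set \<Rightarrow> 'x set) \<Rightarrow> 'x set \<Rightarrow> bool" where
  "extreme H g c \<longleftrightarrow> (\<forall>x\<in>TT H g. x \<subset> c \<longrightarrow> x \<union> g x \<subseteq> c)"

lemma TT_H: "x \<in> TT H g \<Longrightarrow> H \<subseteq> x"
  by (induct rule: TT.induct) auto

lemma TT_L1:
  assumes ex: "extreme H g c" and c: "c \<in> TT H g"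
  shows "x \<in> TT H g \<Longrightarrow> x \<subseteq> c \<or> c \<union> g c \<subseteq> x"
proof (induct rule: TT.induct)
  case base then show ?case using TT_H[OF c] by blast
next
  case (step x)
  show ?case
  proof (cases "x \<subset> c")
    case True then show ?thesis using ex step unfolding extreme_def by blast
  next
    case False then show ?thesis using step by blast
  qed
next
  case (union M)
  show ?case
  proof (cases "\<forall>m\<in>M. m \<subseteq> c")
    case True then show ?thesis by blast
  next
    case False then show ?thesis using union by blast
  qed
qed

lemma TT_extreme: "c \<in> TT H g \<Longrightarrow> extreme H g c"
proof (induct rule: TT.induct)
  case base then show ?case unfolding extreme_def using TT_H by blast
next
  case (step c)
  show ?case unfolding extreme_def
  proof (intro ballI impI)
    fix x assume x: "x \<in> TT H g" "x \<subset> c \<union> g c"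
    have "x \<subseteq> c \<or> c \<union> g c \<subseteq> x" using TT_L1[OF step(2) step(1) x(1)] .
    then have "x \<subseteq> c" using x(2) by blast
    then show "x \<union> g x \<subseteq> c \<union> g c"
    proof (cases "x = c")
      case False then show ?thesis using step(2) x(1) \<open>x \<subseteq> c\<close> unfolding extreme_def by blast
    qed simp
  qed
next
  case (union M)
  show ?case unfolding extreme_def
  proof (intro ballI impI)
    fix x assume x: "x \<in> TT H g" "x \<subset> \<Union>M"
    then obtain m where m: "m \<in> M" "\<not> m \<subseteq> x" by blast
    have "extreme H g m" "m \<in> TT H g" using union(3)[OF m(1)] union(2)[OF m(1)] by auto
    then have "x \<subseteq> m \<or> m \<union> g m \<subseteq> x" using TT_L1 x(1) by blast
    then have "x \<subset> m" using m(2) by blast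
    then have "x \<union> g x \<subseteq> m" using \<open>extreme H g m\<close> x(1) unfolding extreme_def by blast
    then show "x \<union> g x \<subseteq> \<Union>M" using m(1) by blast
  qed
qed

lemma TT_cmp: "x \<in> TT H g \<Longrightarrow> c \<in> TT H g \<Longrightarrow> x \<subseteq> c \<or> c \<union> g c \<subseteq> x"
  using TT_L1 TT_extreme by blast

lemma TT_lin: "x \<in> TT H g \<Longrightarrow> c \<in> TT H g \<Longrightarrow> x \<subseteq> c \<or> c \<subseteq> x"
  using TT_cmp by blast

lemma TT_fix:
  assumes c: "c \<in> TT H g" and fx: "c \<union> g c = c"
  shows "x \<in> TT H g \<Longrightarrow> x \<subseteq> c"
proof (induct rule: TT.induct)
  case base then show ?case using TT_H[OF c] .
next
  case (step x)
  show ?case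
  proof (cases "x = c")
    case True then show ?thesis using fx by simp
  next
    case False then show ?thesis using step TT_extreme[OF c] unfolding extreme_def by blast
  qed
qed blast

lemma TT_min:
  assumes S: "S \<subseteq> TT H g" "S \<noteq> {}"
  shows "\<exists>y\<in>S. \<forall>s\<in>S. y \<subseteq> s"
proof -
  define D where "D = {x \<in> TT H g. \<forall>s\<in>S. x \<subseteq> s}"
  have HD: "H \<in> D" unfolding D_def using S TT_H TT.base by blast
  define y where "y = \<Union>D"
  have yT: "y \<in> TT H g" unfolding y_def using HD D_def by (auto intro!: TT.union)
  have ys: "\<forall>s\<in>S. y \<subseteq> s" unfolding y_def D_def by blast
  show ?thesis
  proof (cases "y \<in> S")
    case True then show ?thesis using ys by blast
  next
    case False
    have gs: "y \<union> g y \<subseteq> s" if "s \<in> S" for s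
    proof -
      have sT: "s \<in> TT H g" using S that by blast
      have d: "s \<subseteq> y \<or> y \<union> g y \<subseteq> s" using TT_cmp[OF sT yT] .
      show ?thesis
      proof (rule ccontr)
        assume "\<not> ?thesis"
        then have "s \<subseteq> y" using d by blast
        moreover have "y \<subseteq> s" using ys that by blast
        ultimately have "s = y" by blast
        then show False using False that by simp
      qed
    qed
    have "y \<union> g y \<in> D" unfolding D_def using gs TT.step[OF yT] by blast
    then have "y \<union> g y = y" unfolding y_def by blast
    then have all: "\<forall>x\<in>TT H g. x \<subseteq> y" using TT_fix[OF yT] by blast
    obtain s where "s \<in> S" using S by blast
    then have "s = y" using all ys S by blast
    then show ?thesis using False \<open>s \<in> S\<close> by blast
  qed
qed

definition RR :: "'x set \<Rightarrow> ('x set \<Rightarrow> 'x set) \<Rightarrow> 'x set rel" where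
  "RR H g = {(x,y). x \<in> TT H g \<and> y \<in> TT H g \<and> x \<subseteq> y}"

lemma RR_Field: "Field (RR H g) = TT H g"
  unfolding RR_def Field_def by auto

lemma RR_wo: "Well_order (RR H g)"
proof -
  have lin: "linear_order_on (TT H g) (RR H g)"
    unfolding linear_order_on_def partial_order_on_def preorder_on_def refl_on_def
      trans_def antisym_def total_on_def RR_def
    using TT_lin by blast
  have "wf (RR H g - Id)"
    unfolding wf_eq_minimal
  proof (intro allI impI)
    fix Q :: "'a set set" and x assume xQ: "x \<in> Q"
    show "\<exists>z\<in>Q. \<forall>y. (y, z) \<in> RR H g - Id \<longrightarrow> y \<notin> Q"
    proof (cases "Q \<inter> TT H g = {}")
      case True then show ?thesis using xQ unfolding RR_def by blast
    next
      case False
      then obtain z where z: "z \<in> Q \<inter> TT H g" "\<forall>s\<in>Q \<inter> TT H g. z \<subseteq> s"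
        using TT_min[of "Q \<inter> TT H g" H g] by blast
      show ?thesis using z unfolding RR_def by blast
    qed
  qed
  then show ?thesis using lin RR_Field unfolding well_order_on_def by metis
qed


lemma TT_imm:
  assumes j: "j \<in> TT H g" and i: "i \<in> TT H g" and ji: "j \<subset> i"
    and all: "\<forall>k\<in>TT H g. k \<subset> i \<longrightarrow> k \<subseteq> j"
  shows "i = j \<union> g j"
proof -
  have gT: "j \<union> g j \<in> TT H g" using TT.step[OF j] .
  have "i \<subseteq> j \<or> j \<union> g j \<subseteq> i" using TT_cmp[OF i j] .
  then have sub: "j \<union> g j \<subseteq> i" using ji by blast
  show ?thesis
  proof (rule ccontr)
    assume "i \<noteq> j \<union> g j"
    then have "j \<union> g j \<subseteq> j" using all gT sub by blast
    then have "j \<union> g j = j" by blast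
    then have "i \<subseteq> j" using TT_fix[OF j] i by blast
    then show False using ji by blast
  qed
qed

lemma TT_lim:
  assumes i: "i \<in> TT H g" and ne: "{k \<in> TT H g. k \<subset> i} \<noteq> {}"
    and nimm: "\<not> (\<exists>j\<in>TT H g. j \<subset> i \<and> (\<forall>k\<in>TT H g. k \<subset> i \<longrightarrow> k \<subseteq> j))"
  shows "i = \<Union>{k \<in> TT H g. k \<subset> i}"
proof (rule ccontr)
  let ?U = "\<Union>{k \<in> TT H g. k \<subset> i}"
  assume ne2: "i \<noteq> ?U"
  have UT: "?U \<in> TT H g" using ne by (intro TT.union) auto
  have "?U \<subseteq> i" by blast
  then have "?U \<subset> i" using ne2 by blast
  then show False using nimm UT by blast
qed

lemma TT_top: "\<Union>(TT H g) \<in> TT H g" "\<Union>(TT H g) \<union> g (\<Union>(TT H g)) = \<Union>(TT H g)"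
proof -
  show t: "\<Union>(TT H g) \<in> TT H g" using TT.base by (intro TT.union) auto
  show "\<Union>(TT H g) \<union> g (\<Union>(TT H g)) = \<Union>(TT H g)" using TT.step[OF t] by blast
qed

lemma TT_countable:
  assumes C: "\<forall>x\<in>TT H g. x \<subseteq> C" "countable C"
  shows "countable (TT H g)"
proof -
  let ?t = "\<Union>(TT H g)"
  have nf: "\<forall>x\<in>TT H g - {?t}. \<exists>q. q \<in> g x \<and> q \<notin> x"
  proof
    fix x assume x: "x \<in> TT H g - {?t}"
    have xT: "x \<in> TT H g" using x by simp
    show "\<exists>q. q \<in> g x \<and> q \<notin> x"
    proof (rule ccontr)
      assume "\<not> (\<exists>q. q \<in> g x \<and> q \<notin> x)"
      then have fx: "x \<union> g x = x" by blast
      have "\<forall>y\<in>TT H g. y \<subseteq> x" using TT_fix[OF xT fx] by blast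
      then have "?t \<subseteq> x" by blast
      moreover have "x \<subseteq> ?t" using xT by blast
      ultimately have "x = ?t" by blast
      then show False using x by simp
    qed
  qed
  obtain p where p: "\<forall>x\<in>TT H g - {?t}. p x \<in> g x \<and> p x \<notin> x"
    using bchoice[OF nf] by (elim exE) simp
  have inj: "inj_on p (TT H g - {?t})"
  proof (rule inj_onI)
    fix x y assume x: "x \<in> TT H g - {?t}" and y: "y \<in> TT H g - {?t}" and e: "p x = p y"
    have xT: "x \<in> TT H g" and yT: "y \<in> TT H g" using x y by auto
    have px: "p x \<in> g x" "p x \<notin> x" using p x by auto
    have py: "p y \<in> g y" "p y \<notin> y" using p y by auto
    have d1: "y \<subseteq> x \<or> x \<union> g x \<subseteq> y" using TT_cmp[OF yT xT] .
    have "\<not> (x \<union> g x \<subseteq> y)"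
    proof
      assume "x \<union> g x \<subseteq> y"
      then have "p x \<in> y" using px(1) by blast
      then show False using py(2) e by simp
    qed
    then have "y \<subseteq> x" using d1 by blast
    have d2: "x \<subseteq> y \<or> y \<union> g y \<subseteq> x" using TT_cmp[OF xT yT] .
    have "\<not> (y \<union> g y \<subseteq> x)"
    proof
      assume "y \<union> g y \<subseteq> x"
      then have "p y \<in> x" using py(1) by blast
      then show False using px(2) e by simp
    qed
    then have "x \<subseteq> y" using d2 by blast
    show "x = y" using \<open>x \<subseteq> y\<close> \<open>y \<subseteq> x\<close> by (rule subset_antisym)
  qed
  have sub: "p ` (TT H g - {?t}) \<subseteq> C"
  proof
    fix q assume "q \<in> p ` (TT H g - {?t})"
    then obtain x where x: "x \<in> TT H g - {?t}" "q = p x" by blast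
    have "p x \<in> g x" using p x(1) by auto
    then have "q \<in> x \<union> g x" using x(2) by simp
    moreover have "x \<union> g x \<in> TT H g" using x(1) by (simp add: TT.step)
    ultimately show "q \<in> C" using C(1) by blast
  qed
  have "countable (p ` (TT H g - {?t}))" by (rule countable_subset[OF sub C(2)])
  then have c: "countable (TT H g - {?t})" by (rule countable_image_inj_on[OF _ inj])
  have "TT H g \<subseteq> insert ?t (TT H g - {?t})" by blast
  moreover have "countable (insert ?t (TT H g - {?t}))" using c by simp
  ultimately show ?thesis by (rule countable_subset)
qed

lemma sp_RR: "i \<in> TT H g \<Longrightarrow> strict_pred (RR H g) i = {k \<in> TT H g. k \<subset> i}"
  unfolding strict_pred_def RR_def by auto

lemma imm_RR: "i \<in> TT H g \<Longrightarrow> immediate_pred (RR H g) j i \<longleftrightarrow>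
   j \<in> TT H g \<and> j \<subset> i \<and> (\<forall>k\<in>TT H g. k \<subset> i \<longrightarrow> k \<subseteq> j)"
  unfolding immediate_pred_def using sp_RR[of i H g] unfolding RR_def by auto

lemma TT_subgroup:
  fixes K :: "('a,'b) monoid_scheme" (structure)
  assumes grp: "group K" and Hs: "subgroup H K"
  shows "x \<in> TT H (normalizer K) \<Longrightarrow> subgroup x K"
proof (induct rule: TT.induct)
  case base then show ?case using Hs .
next
  case (step x)
  have "x \<union> normalizer K x = normalizer K x" using sub_norm[OF grp step(2)] by blast
  then show ?case using group.normalizer_imp_subgroup[OF grp] step(2) subgroup.subset by metis
next
  case (union M)
  have "subgroup (\<Union>j\<in>M. id j) K"
  proof (rule union_chain_subgroup[OF grp union(1)])
    show "subgroup (id j) K" if "j \<in> M" for j using union(3)[OF that] by simp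
    show "id j \<subseteq> id k \<or> id k \<subseteq> id j" if "j \<in> M" "k \<in> M" for j k
      using TT_lin[OF union(2)[OF that(1)] union(2)[OF that(2)]] by simp
  qed
  then show ?case by simp
qed

lemma TT_tower:
  fixes K :: "('a,'b) monoid_scheme" (structure)
  assumes grp: "group K" and Hs: "subgroup H K"
  shows "normalizer_tower_on K H (RR H (normalizer K)) id"
  unfolding normalizer_tower_on_def
proof (intro conjI ballI)
  show "Well_order (RR H (normalizer K))" by (rule RR_wo)
  fix i assume "i \<in> Field (RR H (normalizer K))"
  then have i: "i \<in> TT H (normalizer K)" using RR_Field by blast
  show "strict_pred (RR H (normalizer K)) i = {} \<longrightarrow> id i = H"
    using sp_RR[OF i] TT_H[OF i] TT.base[of H "normalizer K"] by auto
  show "\<forall>j. immediate_pred (RR H (normalizer K)) j i \<longrightarrow> id i = normalizer K (id j)"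
  proof (intro allI impI)
    fix j assume "immediate_pred (RR H (normalizer K)) j i"
    then have j: "j \<in> TT H (normalizer K)" "j \<subset> i"
      "\<forall>k\<in>TT H (normalizer K). k \<subset> i \<longrightarrow> k \<subseteq> j" using imm_RR[OF i] by auto
    have "i = j \<union> normalizer K j" using TT_imm[OF j(1) i j(2) j(3)] .
    moreover have "j \<subseteq> normalizer K j" using sub_norm[OF grp TT_subgroup[OF grp Hs j(1)]] .
    ultimately show "id i = normalizer K (id j)" by auto
  qed
  show "strict_pred (RR H (normalizer K)) i \<noteq> {} \<and> (\<nexists>j. immediate_pred (RR H (normalizer K)) j i) \<longrightarrow>
    id i = \<Union> (id ` strict_pred (RR H (normalizer K)) i)"
  proof
    assume a: "strict_pred (RR H (normalizer K)) i \<noteq> {} \<and> (\<nexists>j. immediate_pred (RR H (normalizer K)) j i)"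
    then have "i = \<Union>{k \<in> TT H (normalizer K). k \<subset> i}"
      using TT_lim[OF i] sp_RR[OF i] imm_RR[OF i] by auto
    then show "id i = \<Union> (id ` strict_pred (RR H (normalizer K)) i)" using sp_RR[OF i] by simp
  qed
qed

lemma tower_transfer:
  assumes tw: "normalizer_tower_on K H R f" and inj: "inj_on e (Field R)"
  shows "normalizer_tower_on K H (dir_image R e) (f \<circ> inv_into (Field R) e)"
proof -
  have wo: "Well_order R" using tw unfolding normalizer_tower_on_def by (rule conjunct1)
  have mem: "(e a, e b) \<in> dir_image R e \<longleftrightarrow> (a,b) \<in> R" if ab: "a \<in> Field R" "b \<in> Field R" for a b
  proof
    assume "(e a, e b) \<in> dir_image R e"
    then obtain a' b' where ab': "(a',b') \<in> R" "e a' = e a" "e b' = e b"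
      unfolding dir_image_def by fastforce
    have "a' \<in> Field R" "b' \<in> Field R" using ab'(1) by (auto intro: FieldI1 FieldI2)
    then have "a' = a" "b' = b" using inj_onD[OF inj ab'(2)] inj_onD[OF inj ab'(3)] ab by auto
    then show "(a,b) \<in> R" using ab'(1) by simp
  next
    assume "(a,b) \<in> R"
    then show "(e a, e b) \<in> dir_image R e" unfolding dir_image_def by blast
  qed
  have FD: "Field (dir_image R e) = e ` Field R" by (rule dir_image_Field)
  have inv: "inv_into (Field R) e (e a) = a" if "a \<in> Field R" for a using inv_into_f_f[OF inj that] .
  have spF: "j \<in> Field R" if "j \<in> strict_pred R i" for j i
    using that unfolding strict_pred_def by (auto intro: FieldI1)
  have sp: "strict_pred (dir_image R e) (e i) = e ` strict_pred R i" if i: "i \<in> Field R" for i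
  proof
    show "strict_pred (dir_image R e) (e i) \<subseteq> e ` strict_pred R i"
    proof
      fix m assume m: "m \<in> strict_pred (dir_image R e) (e i)"
      then have mm: "(m, e i) \<in> dir_image R e" "m \<noteq> e i" unfolding strict_pred_def by auto
      then have "m \<in> Field (dir_image R e)" by (auto intro: FieldI1)
      then obtain j where j: "j \<in> Field R" "m = e j" using FD by blast
      have "(j,i) \<in> R" using mm(1) mem[OF j(1) i] j(2) by simp
      moreover have "j \<noteq> i" using mm(2) j(2) by auto
      ultimately have "j \<in> strict_pred R i" unfolding strict_pred_def by simp
      then show "m \<in> e ` strict_pred R i" using j(2) by simp
    qed
    show "e ` strict_pred R i \<subseteq> strict_pred (dir_image R e) (e i)"
    proof
      fix m assume "m \<in> e ` strict_pred R i"
      then obtain j where j: "j \<in> strict_pred R i" "m = e j" by blast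
      have jF: "j \<in> Field R" using spF[OF j(1)] .
      have ji: "(j,i) \<in> R" "j \<noteq> i" using j(1) unfolding strict_pred_def by auto
      have "e j \<noteq> e i" using ji(2) inj_on_eq_iff[OF inj jF i] by simp
      moreover have "(e j, e i) \<in> dir_image R e" using mem[OF jF i] ji(1) by simp
      ultimately show "m \<in> strict_pred (dir_image R e) (e i)"
        using j(2) unfolding strict_pred_def by simp
    qed
  qed
  have imm1: "immediate_pred (dir_image R e) (e j) (e i)" if ji: "immediate_pred R j i" "i \<in> Field R" for i j
  proof -
    have jsp: "j \<in> strict_pred R i" and all: "\<forall>k\<in>strict_pred R i. (k, j) \<in> R"
      using ji(1) unfolding immediate_pred_def by auto
    have jF: "j \<in> Field R" using spF[OF jsp] .
    have "e j \<in> strict_pred (dir_image R e) (e i)" using sp[OF ji(2)] jsp by simp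
    moreover have "\<forall>k\<in>strict_pred (dir_image R e) (e i). (k, e j) \<in> dir_image R e"
    proof
      fix k assume "k \<in> strict_pred (dir_image R e) (e i)"
      then obtain k' where k': "k' \<in> strict_pred R i" "k = e k'" using sp[OF ji(2)] by auto
      have "(k', j) \<in> R" using all k'(1) by blast
      then show "(k, e j) \<in> dir_image R e" using mem[OF spF[OF k'(1)] jF] k'(2) by simp
    qed
    ultimately show ?thesis unfolding immediate_pred_def by simp
  qed
  have imm2: "\<exists>j. m = e j \<and> immediate_pred R j i"
    if th: "immediate_pred (dir_image R e) m (e i)" "i \<in> Field R" for i m
  proof -
    have msp: "m \<in> strict_pred (dir_image R e) (e i)"
      and all: "\<forall>k\<in>strict_pred (dir_image R e) (e i). (k, m) \<in> dir_image R e"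
      using th(1) unfolding immediate_pred_def by auto
    obtain j where j: "j \<in> strict_pred R i" "m = e j" using msp sp[OF th(2)] by auto
    have jF: "j \<in> Field R" using spF[OF j(1)] .
    have "\<forall>k\<in>strict_pred R i. (k, j) \<in> R"
    proof
      fix k assume k: "k \<in> strict_pred R i"
      then have "e k \<in> strict_pred (dir_image R e) (e i)" using sp[OF th(2)] by simp
      then have "(e k, e j) \<in> dir_image R e" using all j(2) by simp
      then show "(k, j) \<in> R" using mem[OF spF[OF k] jF] by simp
    qed
    then have "immediate_pred R j i" using j(1) unfolding immediate_pred_def by simp
    then show ?thesis using j(2) by blast
  qed
  show ?thesis unfolding normalizer_tower_on_def
  proof (intro conjI ballI)
    show "Well_order (dir_image R e)" using Well_order_dir_image[OF wo inj] .
    fix n assume "n \<in> Field (dir_image R e)"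
    then obtain i where i: "i \<in> Field R" "n = e i" using FD by blast
    have cl: "(strict_pred R i = {} \<longrightarrow> f i = H) \<and>
        (\<forall>j. immediate_pred R j i \<longrightarrow> f i = normalizer K (f j)) \<and>
        (strict_pred R i \<noteq> {} \<and> (\<nexists>j. immediate_pred R j i) \<longrightarrow>
            f i = (\<Union>j \<in> strict_pred R i. f j))"
      using tw_cl[OF tw i(1)] .
    have fn: "(f \<circ> inv_into (Field R) e) n = f i" using inv[OF i(1)] i(2) by simp
    have spn: "strict_pred (dir_image R e) n = e ` strict_pred R i" using sp[OF i(1)] i(2) by simp
    show "strict_pred (dir_image R e) n = {} \<longrightarrow> (f \<circ> inv_into (Field R) e) n = H"
    proof
      assume "strict_pred (dir_image R e) n = {}"
      then have "strict_pred R i = {}" using spn by simp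
      then show "(f \<circ> inv_into (Field R) e) n = H" using cl fn by simp
    qed
    show "\<forall>j. immediate_pred (dir_image R e) j n \<longrightarrow>
      (f \<circ> inv_into (Field R) e) n = normalizer K ((f \<circ> inv_into (Field R) e) j)"
    proof (intro allI impI)
      fix m assume "immediate_pred (dir_image R e) m n"
      then have "immediate_pred (dir_image R e) m (e i)" using i(2) by simp
      then obtain j where j: "m = e j" "immediate_pred R j i" using imm2[OF _ i(1)] by blast
      have "j \<in> strict_pred R i" using j(2) unfolding immediate_pred_def by simp
      then have jF: "j \<in> Field R" by (rule spF)
      have "(f \<circ> inv_into (Field R) e) m = f j" using inv[OF jF] j(1) by simp
      moreover have "f i = normalizer K (f j)" using cl j(2) by blast
      ultimately show "(f \<circ> inv_into (Field R) e) n = normalizer K ((f \<circ> inv_into (Field R) e) m)"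
        using fn by simp
    qed
    show "strict_pred (dir_image R e) n \<noteq> {} \<and> (\<nexists>j. immediate_pred (dir_image R e) j n) \<longrightarrow>
      (f \<circ> inv_into (Field R) e) n = \<Union> ((f \<circ> inv_into (Field R) e) ` strict_pred (dir_image R e) n)"
    proof
      assume a: "strict_pred (dir_image R e) n \<noteq> {} \<and> (\<nexists>j. immediate_pred (dir_image R e) j n)"
      have ne: "strict_pred R i \<noteq> {}" using a spn by auto
      have nimm: "\<nexists>j. immediate_pred R j i"
      proof
        assume "\<exists>j. immediate_pred R j i"
        then obtain j where "immediate_pred R j i" by blast
        then have "immediate_pred (dir_image R e) (e j) n" using imm1[OF _ i(1)] i(2) by simp
        then show False using a by blast
      qed
      have fi: "f i = (\<Union>j \<in> strict_pred R i. f j)" using cl ne nimm by blast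
      have "(f \<circ> inv_into (Field R) e) ` strict_pred (dir_image R e) n = f ` strict_pred R i"
      proof -
        have "(f \<circ> inv_into (Field R) e) ` strict_pred (dir_image R e) n
            = (\<lambda>j. f (inv_into (Field R) e (e j))) ` strict_pred R i"
          using spn by (simp add: image_image)
        also have "\<dots> = f ` strict_pred R i"
          by (rule image_cong) (simp_all add: inv spF)
        finally show ?thesis .
      qed
      then show "(f \<circ> inv_into (Field R) e) n =
        \<Union> ((f \<circ> inv_into (Field R) e) ` strict_pred (dir_image R e) n)" using fi fn by simp
    qed
  qed
qed

theorem proposition1p6:
  fixes K :: "('a, 'b) monoid_scheme" and G H :: "'a set"
  assumes "group K"
    and "subgroup H K" and "subgroup G K" and "G \<subseteq> H"
    and "countable H"
    and "\<exists>S. finite S \<and> S \<subseteq> carrier K \<and> generate K S = G"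
    and "centralizer K G = {\<one>\<^bsub>K\<^esub>}"
  shows "(\<forall>(r :: 'i rel) f. normalizer_tower_on K H r f \<longrightarrow>
            (\<forall>i \<in> Field r. countable (f i)))
       \<and> (\<exists>(r :: nat rel) f i. normalizer_tower_on K H r f \<and> countable (Field r)
            \<and> i \<in> Field r \<and> normalizer K (f i) = f i)"
proof -
  obtain S where S: "finite S" "S \<subseteq> carrier K" "generate K S = G" using assms(6) by blast
  have SG: "S \<subseteq> G"
  proof
    fix s assume "s \<in> S"
    then show "s \<in> G" using generate.incl[of s S K] S(3) by simp
  qed
  have SH: "S \<subseteq> H" using SG assms(4) by (rule subset_trans)
  have inj: "inj_on (\<lambda>x. \<lambda>s\<in>S. x \<otimes>\<^bsub>K\<^esub> s \<otimes>\<^bsub>K\<^esub> inv\<^bsub>K\<^esub> x) (carrier K)"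
    using conj_inj[OF assms(1) S(2) S(3) assms(7)] .
  have Cc: "countable (\<Union>k. Cn K H S k)"
    using Cn_countable[OF assms(5) S(1) inj] by simp
  have part1: "\<forall>(r :: 'i rel) f. normalizer_tower_on K H r f \<longrightarrow>
            (\<forall>i \<in> Field r. countable (f i))"
  proof (intro allI impI ballI)
    fix r :: "'i rel" and f i assume tw: "normalizer_tower_on K H r f" and iF: "i \<in> Field r"
    have "f i \<subseteq> (\<Union>k. Cn K H S k)"
      using tower_props[OF assms(1) assms(2) SH S(1) tw, of i] iF by simp
    then show "countable (f i)" using Cc by (rule countable_subset)
  qed
  let ?T = "TT H (normalizer K)"
  let ?R = "RR H (normalizer K)"
  have twR: "normalizer_tower_on K H ?R id" using TT_tower[OF assms(1) assms(2)] .
  have allC: "\<forall>x\<in>?T. x \<subseteq> (\<Union>k. Cn K H S k)"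
  proof
    fix x assume "x \<in> ?T"
    then have "x \<in> Field ?R" by (simp add: RR_Field)
    then show "x \<subseteq> (\<Union>k. Cn K H S k)"
      using tower_props[OF assms(1) assms(2) SH S(1) twR, of x] by simp
  qed
  have Tc: "countable ?T" by (rule TT_countable[OF allC Cc])
  define e where "e = to_nat_on ?T"
  have "inj_on e ?T" unfolding e_def by (rule inj_on_to_nat_on[OF Tc])
  then have inje: "inj_on e (Field ?R)" by (simp add: RR_Field)
  define r where "r = dir_image ?R e"
  define f where "f = id \<circ> inv_into (Field ?R) e"
  have twr: "normalizer_tower_on K H r f" unfolding r_def f_def using tower_transfer[OF twR inje] .
  let ?t = "\<Union>?T"
  have tT: "?t \<in> ?T" by (rule TT_top(1))
  have tfix: "?t \<union> normalizer K ?t = ?t" by (rule TT_top(2))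
  have ir: "e ?t \<in> Field r" unfolding r_def dir_image_Field using tT by (simp add: RR_Field)
  have fi: "f (e ?t) = ?t" unfolding f_def using inv_into_f_f[OF inje] tT by (simp add: RR_Field)
  have s1: "?t \<subseteq> normalizer K ?t" using sub_norm[OF assms(1) TT_subgroup[OF assms(1) assms(2) tT]] .
  have s2: "normalizer K ?t \<subseteq> ?t" using tfix by blast
  have nf: "normalizer K (f (e ?t)) = f (e ?t)" unfolding fi using s2 s1 by (rule subset_antisym)
  have cr: "countable (Field r)" by (rule countable_subset[OF subset_UNIV countableI_type])
  have ex: "\<exists>(r :: nat rel) f i. normalizer_tower_on K H r f \<and> countable (Field r)
            \<and> i \<in> Field r \<and> normalizer K (f i) = f i"
    by (intro exI[of _ r] exI[of _ f] exI[of _ "e ?t"] conjI twr cr ir nf)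
  show ?thesis by (rule conjI[OF part1 ex])
qed

end
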